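(* Let $X \sim \mathcal{N}(\mu,\sigma^2)$ be a single observation, with $\mu\in\mathbb{R}$ and $\sigma>0$ unknown, and for $c>1$ let $I_2(c) = (-c|X|,\; c|X|)$. Then the coverage probability $P_{\mu,\sigma}(\mu \in I_2(c))$ depends on $(\mu,\sigma)$ only through $\lambda=\mu/\sigma$ and is an even function of $\lambda$. Writing $\lambda=|\mu|/\sigma\ge 0$, it equals $$P_2(\lambda,c) = \Phi\Big(\frac{c-1}{c}\lambda\Big) + 1 - \Phi\Big(\frac{c+1}{c}\lambda\Big).$$ Over $\lambda\ge0$, $P_2(\lambda,c)$ is minimized at $$\lambda^*(c) = \Big[\frac{c}{2}\log\frac{c+1}{c-1}\Big]^{1/2}.$$ Consequently, for every $\alpha$ with $0<\alpha<1/2$ there exists a constant $c=c(\alpha)>1$ such that $\inf_{\mu\in\mathbb{R},\sigma>0} P_{\mu,\sigma}(\mu\in I_2(c(\alpha))) \ge 1-\alpha$.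
   Context: $\Phi$ denotes the standard normal cumulative distribution function. $I_2(c)$ is the (Stein) interval symmetric about $0$ with half-length $c|X|$. *)

theory Defs
  imports "HOL-Probability.Probability"
begin

definition normal_law :: "real \<Rightarrow> real \<Rightarrow> real measure" where
  "normal_law mu sig = density lborel (normal_density mu sig)"

definition Phi :: "real \<Rightarrow> real" where
  "Phi x = measure (normal_law 0 1) {..x}"

definition coverage :: "real \<Rightarrow> real \<Rightarrow> real \<Rightarrow> real" where
  "coverage c mu sig = measure (normal_law mu sig) {x. - c * \<bar>x\<bar> < mu \<and> mu < c * \<bar>x\<bar>}"

definition P2 :: "real \<Rightarrow> real \<Rightarrow> real" where
  "P2 lam c = Phi ((c - 1) / c * lam) + 1 - Phi ((c + 1) / c * lam)"

definition lambda_star :: "real \<Rightarrow> real" where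
  "lambda_star c = sqrt (c / 2 * ln ((c + 1) / (c - 1)))"

end

theory Submission
  imports Defs
begin

lemma emeasure_normal_affine:
  fixes s :: real
  assumes s: "s \<noteq> 0" and A[measurable]: "A \<in> sets borel"
  shows "emeasure (normal_law mu \<bar>s\<bar>) A = emeasure (normal_law 0 1) {z. mu + s*z \<in> A}"
proof -
  have mA: "{z. mu + s*z \<in> A} \<in> sets borel" by measurable
  have "emeasure (normal_law mu \<bar>s\<bar>) A = (\<integral>\<^sup>+x. ennreal (normal_density mu \<bar>s\<bar> x) * indicator A x \<partial>lborel)"
    unfolding normal_law_def by (subst emeasure_density) auto
  also have "\<dots> = \<bar>s\<bar> * (\<integral>\<^sup>+x. ennreal (normal_density mu \<bar>s\<bar> (mu + s*x)) * indicator A (mu + s*x) \<partial>lborel)"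
    by (rule nn_integral_real_affine[OF _ s]) measurable
  also have "\<dots> = (\<integral>\<^sup>+x. ennreal (\<bar>s\<bar> * normal_density mu \<bar>s\<bar> (mu + s*x)) * indicator A (mu + s*x) \<partial>lborel)"
    by (subst nn_integral_cmult[symmetric]) (auto simp: ennreal_mult' mult.assoc)
  also have "\<dots> = (\<integral>\<^sup>+x. ennreal (normal_density 0 1 x) * indicator {z. mu + s*z \<in> A} x \<partial>lborel)"
  proof (rule nn_integral_cong)
    fix x
    have "\<bar>s\<bar> * normal_density mu \<bar>s\<bar> (mu + s*x) = normal_density 0 1 x"
      using s by (simp add: normal_density_def real_sqrt_mult power_mult_distrib field_simps)
    then show "ennreal (\<bar>s\<bar> * normal_density mu \<bar>s\<bar> (mu + s*x)) * indicator A (mu + s*x) = ennreal (normal_density 0 1 x) * indicator {z. mu + s*z \<in> A} x"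
      by (simp add: indicator_def)
  qed
  also have "\<dots> = emeasure (normal_law 0 1) {z. mu + s*z \<in> A}"
    unfolding normal_law_def using mA by (subst emeasure_density) auto
  finally show ?thesis .
qed

lemma prob_normal: "sig > 0 \<Longrightarrow> prob_space (normal_law mu sig)"
  unfolding normal_law_def by (rule prob_space_normal_density)

lemma sets_normal[simp]: "sets (normal_law mu sig) = sets borel"
  unfolding normal_law_def by simp

lemma space_normal[simp]: "space (normal_law mu sig) = UNIV"
  unfolding normal_law_def by simp

lemma emeasure_normal_singleton: "emeasure (normal_law mu sig) {x} = 0"
proof -
  have "emeasure (normal_law mu sig) {x} = (\<integral>\<^sup>+y. ennreal (normal_density mu sig y) * indicator {x} y \<partial>lborel)"
    unfolding normal_law_def by (subst emeasure_density) auto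
  also have "\<dots> = 0"
    by (subst nn_integral_0_iff_AE) (auto intro!: eventually_mono[OF AE_lborel_singleton[of x]])
  finally show ?thesis .
qed

lemma measure_normal_affine:
  fixes s :: real
  assumes s: "s \<noteq> 0" and A: "A \<in> sets borel"
  shows "measure (normal_law mu \<bar>s\<bar>) A = measure (normal_law 0 1) {z. mu + s*z \<in> A}"
  unfolding measure_def using emeasure_normal_affine[OF assms] by simp

lemma Phi_less: "measure (normal_law 0 1) {..<x} = Phi x"
proof -
  interpret prob_space "normal_law 0 1" by (rule prob_normal) simp
  have "{..x} = {..<x} \<union> {x}" by auto
  then have "measure (normal_law 0 1) {..x} = measure (normal_law 0 1) {..<x} + measure (normal_law 0 1) {x}"
    by (metis finite_measure_Union sets_normal borel_closed closed_singleton sets_lborel atLeast_borel lessThan_borel Int_commute disjoint_iff lessThan_iff less_irrefl singletonD)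
  moreover have "measure (normal_law 0 1) {x} = 0"
    using emeasure_normal_singleton by (simp add: measure_def)
  ultimately show ?thesis unfolding Phi_def by simp
qed

lemma Phi_greater: "measure (normal_law 0 1) {x<..} = 1 - Phi x"
proof -
  interpret prob_space "normal_law 0 1" by (rule prob_normal) simp
  have "{x<..} = space (normal_law 0 1) - {..x}" by (auto simp: space_normal)
  moreover have "{..x} \<in> events" by simp
  ultimately show ?thesis unfolding Phi_def by (metis prob_compl)
qed

lemma std_two_tails:
  assumes "t \<ge> 0"
  shows "measure (normal_law 0 1) {z. t < \<bar>z - L\<bar>} = Phi (L - t) + 1 - Phi (L + t)"
proof -
  interpret prob_space "normal_law 0 1" by (rule prob_normal) simp
  have eq: "{z. t < \<bar>z - L\<bar>} = {..<L - t} \<union> {L + t<..}" by auto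
  have "measure (normal_law 0 1) ({..<L - t} \<union> {L + t<..}) = measure (normal_law 0 1) {..<L - t} + measure (normal_law 0 1) {L + t<..}"
    using assms by (intro finite_measure_Union) auto
  then show ?thesis unfolding eq by (simp add: Phi_less Phi_greater)
qed

lemma coverage_eq:
  assumes c: "c > 1" and sig: "sig > 0"
  shows "coverage c mu sig = P2 (\<bar>mu\<bar> / sig) c"
proof -
  define s where "s = (if mu \<ge> 0 then - sig else sig)"
  define L where "L = \<bar>mu\<bar> / sig"
  have s0: "s \<noteq> 0" and sabs: "\<bar>s\<bar> = sig" using sig by (auto simp: s_def)
  have A: "{x. - c * \<bar>x\<bar> < mu \<and> mu < c * \<bar>x\<bar>} \<in> sets borel" by measurable
  have "coverage c mu sig = measure (normal_law 0 1) {z. mu + s*z \<in> {x. - c * \<bar>x\<bar> < mu \<and> mu < c * \<bar>x\<bar>}}"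
    unfolding coverage_def using measure_normal_affine[OF s0 A, of mu] sabs by simp
  also have "{z. mu + s*z \<in> {x. - c * \<bar>x\<bar> < mu \<and> mu < c * \<bar>x\<bar>}} = {z. L / c < \<bar>z - L\<bar>}"
  proof -
    have 1: "\<bar>mu + s*z\<bar> = sig * \<bar>z - L\<bar>" for z
    proof -
      have "mu + s*z = (if mu \<ge> 0 then - (sig * (z - L)) else sig * (z - L))"
        using sig by (auto simp: s_def L_def field_simps)
      then show ?thesis using sig by (auto simp: abs_mult)
    qed
    have 2: "(- c * \<bar>y\<bar> < mu \<and> mu < c * \<bar>y\<bar>) \<longleftrightarrow> \<bar>mu\<bar> < c * \<bar>y\<bar>" for y by auto
    have 3: "\<bar>mu\<bar> < c * (sig * w) \<longleftrightarrow> L / c < w" for w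
      using sig c by (simp add: L_def field_simps)
    show ?thesis using 1 2 3 by auto
  qed
  also have "measure (normal_law 0 1) {z. L / c < \<bar>z - L\<bar>} = Phi (L - L/c) + 1 - Phi (L + L/c)"
    using c sig by (intro std_two_tails) (auto simp: L_def)
  also have "\<dots> = P2 L c"
    unfolding P2_def using c by (simp add: field_simps)
  finally show ?thesis by (simp add: L_def)
qed

lemma cont_phi: "continuous_on S (normal_density 0 1)"
  unfolding normal_density_def by (intro continuous_intros) auto

lemma Phi_interval:
  assumes "a \<le> b"
  shows "Phi b - Phi a = integral {a..b} (normal_density 0 1)"
proof -
  interpret prob_space "normal_law 0 1" by (rule prob_normal) simp
  have "{..b} = {..<a} \<union> {a..b}" using assms by auto
  then have "measure (normal_law 0 1) {..b} = measure (normal_law 0 1) {..<a} + measure (normal_law 0 1) {a..b}"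
    by (metis finite_measure_Union sets_normal sets_lborel atLeastAtMost_borel lessThan_borel
        disjoint_iff lessThan_iff atLeastAtMost_iff not_less)
  then have 1: "Phi b - Phi a = measure (normal_law 0 1) {a..b}"
    using Phi_less[of a] unfolding Phi_def by simp
  have hi: "(normal_density 0 1 has_integral integral {a..b} (normal_density 0 1)) {a..b}"
    by (intro integrable_integral integrable_continuous_interval cont_phi)
  have "emeasure (normal_law 0 1) {a..b} = (\<integral>\<^sup>+x. ennreal (normal_density 0 1 x) * indicator {a..b} x \<partial>lborel)"
    unfolding normal_law_def by (subst emeasure_density) auto
  also have "\<dots> = ennreal (integral {a..b} (normal_density 0 1))"
    by (rule nn_integral_has_integral_lebesgue'[OF _ hi]) simp
  finally have "measure (normal_law 0 1) {a..b} = integral {a..b} (normal_density 0 1)"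
    unfolding measure_def
    by (simp add: integral_nonneg[OF integrable_continuous_interval[OF cont_phi]])
  with 1 show ?thesis by simp
qed

lemma DERIV_Phi: "(Phi has_real_derivative normal_density 0 1 x) (at x)"
proof -
  have "((\<lambda>y. integral {x-1..y} (normal_density 0 1)) has_real_derivative normal_density 0 1 x) (at x within {x-1..x+1})"
    by (intro integral_has_real_derivative cont_phi) auto
  then have "((\<lambda>y. integral {x-1..y} (normal_density 0 1)) has_real_derivative normal_density 0 1 x) (at x)"
    by (simp add: at_within_Icc_at)
  then have d: "((\<lambda>y. Phi (x-1) + integral {x-1..y} (normal_density 0 1)) has_real_derivative normal_density 0 1 x) (at x)"
    by (intro derivative_eq_intros) auto
  show ?thesis
  proof (rule has_field_derivative_transform_within_open[OF d, of "{x-1<..<x+1}"])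
    fix y assume "y \<in> {x-1<..<x+1}"
    then show "Phi (x-1) + integral {x-1..y} (normal_density 0 1) = Phi y"
      using Phi_interval[of "x-1" y] by simp
  qed auto
qed


lemma DERIV_P2:
  "((\<lambda>l. P2 l c) has_real_derivative
     ((c-1)/c * normal_density 0 1 ((c-1)/c * l) - (c+1)/c * normal_density 0 1 ((c+1)/c * l))) (at l)"
  unfolding P2_def
  by (rule derivative_eq_intros DERIV_chain2[OF DERIV_Phi] | simp add: algebra_simps)+

lemma cont_P2: "continuous_on S (\<lambda>l. P2 l c)"
  using DERIV_P2 by (meson DERIV_isCont continuous_at_imp_continuous_on)

lemma lambda_star_nonneg: "c > 1 \<Longrightarrow> lambda_star c \<ge> 0"
  unfolding lambda_star_def by (intro real_sqrt_ge_zero mult_nonneg_nonneg ln_ge_zero) auto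

lemma sign_lemma:
  assumes c: "c > 1" and l: "l \<ge> 0"
  shows "((c-1)/c * normal_density 0 1 ((c-1)/c * l) \<le> (c+1)/c * normal_density 0 1 ((c+1)/c * l))
         \<longleftrightarrow> l \<le> lambda_star c"
proof -
  define a where "a = (c-1)/c"
  define b where "b = (c+1)/c"
  have a: "a > 0" and b: "b > 0" using c by (auto simp: a_def b_def)
  have k: "1 / sqrt (2*pi) > 0" by simp
  have "a * normal_density 0 1 (a * l) \<le> b * normal_density 0 1 (b * l)
        \<longleftrightarrow> a * exp (-((a*l)^2)/2) \<le> b * exp (-((b*l)^2)/2)"
    using k by (simp add: std_normal_density_def mult.left_commute[of _ "1 / sqrt (2*pi)"] divide_le_cancel)
  also have "\<dots> \<longleftrightarrow> exp (ln a - ((a*l)^2)/2) \<le> exp (ln b - ((b*l)^2)/2)"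
  proof -
    have e: "x * exp (- y / 2) = exp (ln x - y / 2)" if "x > 0" for x y :: real
    proof -
      have "exp (ln x - y / 2) = exp (ln x) * exp (- y / 2)"
        by (metis exp_add diff_conv_add_uminus minus_divide_left)
      then show ?thesis using that by simp
    qed
    have "a * exp (-((a*l)^2)/2) = exp (ln a - ((a*l)^2)/2)" "b * exp (-((b*l)^2)/2) = exp (ln b - ((b*l)^2)/2)"
      using e[OF a] e[OF b] by blast+
    then show ?thesis by simp
  qed
  also have "\<dots> \<longleftrightarrow> (b^2 - a^2) * l^2 / 2 \<le> ln b - ln a"
    by (simp add: power_mult_distrib algebra_simps diff_divide_distrib)
  also have "(b^2 - a^2) = 4 / c" using c by (simp add: a_def b_def field_simps power2_eq_square)
  also have "ln b - ln a = ln ((c+1)/(c-1))"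
  proof -
    have "b / a = (c+1)/(c-1)" using c by (simp add: a_def b_def field_simps)
    then show ?thesis using ln_div[of b a] a b by simp
  qed
  also have "4 / c * l^2 / 2 \<le> ln ((c+1)/(c-1)) \<longleftrightarrow> l^2 \<le> c / 2 * ln ((c+1)/(c-1))"
    using c by (simp add: field_simps)
  also have "\<dots> \<longleftrightarrow> l \<le> lambda_star c"
  proof -
    have "0 \<le> c / 2 * ln ((c+1)/(c-1))" using c by (intro mult_nonneg_nonneg ln_ge_zero) auto
    then show ?thesis unfolding lambda_star_def using l
      by (metis real_le_rsqrt real_sqrt_le_iff real_sqrt_pow2 real_sqrt_abs abs_of_nonneg power2_eq_square)
  qed
  finally show ?thesis by (simp add: a_def b_def)
qed

lemma P2_min:
  assumes c: "c > 1" and l: "l \<ge> 0"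
  shows "P2 (lambda_star c) c \<le> P2 l c"
proof (cases "l \<le> lambda_star c")
  case True
  show ?thesis
  proof (rule DERIV_nonpos_imp_decreasing_open[OF True _ cont_P2])
    fix x assume "l < x" "x < lambda_star c"
    then have "(c-1)/c * normal_density 0 1 ((c-1)/c * x) \<le> (c+1)/c * normal_density 0 1 ((c+1)/c * x)"
      using sign_lemma[OF c, of x] l by auto
    then show "\<exists>y. ((\<lambda>l. P2 l c) has_real_derivative y) (at x) \<and> y \<le> 0"
      using DERIV_P2 by fastforce
  qed
next
  case False
  then have F: "lambda_star c \<le> l" by simp
  show ?thesis
  proof (rule DERIV_nonneg_imp_increasing_open[OF F _ cont_P2])
    fix x assume "lambda_star c < x" "x < l"
    then have "\<not> (c-1)/c * normal_density 0 1 ((c-1)/c * x) \<le> (c+1)/c * normal_density 0 1 ((c+1)/c * x)"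
      using sign_lemma[OF c, of x] lambda_star_nonneg[OF c] by auto
    then show "\<exists>y. ((\<lambda>l. P2 l c) has_real_derivative y) (at x) \<and> y \<ge> 0"
      using DERIV_P2 by fastforce
  qed
qed

lemma gap_bound:
  assumes c: "c \<ge> 2" and l: "l \<ge> 0"
  shows "Phi ((c+1)/c * l) - Phi ((c-1)/c * l) \<le> 4 / c"
proof (cases "l = 0")
  case True then show ?thesis using c by simp
next
  case False
  then have lp: "l > 0" using l by simp
  have lt: "(c-1)/c * l < (c+1)/c * l" using c lp by (intro mult_strict_right_mono divide_strict_right_mono) auto
  obtain z where z1: "(c-1)/c * l < z" and z2: "z < (c+1)/c * l"
    and eq: "Phi ((c+1)/c * l) - Phi ((c-1)/c * l) = ((c+1)/c * l - (c-1)/c * l) * normal_density 0 1 z"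
    using MVT2[OF lt, of Phi "normal_density 0 1"] DERIV_Phi by blast
  have "(c-1)/c \<ge> 1/2" using c by (simp add: field_simps)
  then have "l/2 \<le> (c-1)/c * l" using l by (metis mult_right_mono times_divide_eq_left mult_1)
  with z1 have zl: "l/2 \<le> z" by linarith
  have "(l/2)^2 \<le> z^2" using zl l by (intro power_mono) auto
  then have "l^2/4 \<le> z^2" by (simp add: power_divide)
  then have "- (z^2) / 2 \<le> - (l^2) / 8" by linarith
  then have "exp (- (z^2) / 2) \<le> exp (- (l^2) / 8)" by (simp only: exp_le_cancel_iff)
  moreover have "normal_density 0 1 z \<le> exp (- (z^2) / 2)"
  proof -
    have "1 / sqrt (2*pi) \<le> 1" using pi_gt3 by (simp add: field_simps real_le_rsqrt)
    then show ?thesis unfolding std_normal_density_def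
      by (metis exp_gt_zero less_le mult_left_le_one_le zero_le_divide_1_iff real_sqrt_ge_zero
          pi_ge_zero mult_nonneg_nonneg zero_le_numeral)
  qed
  ultimately have nd: "normal_density 0 1 z \<le> exp (- (l^2) / 8)"
    by linarith
  have "l / 2 \<le> 1 + l^2/8"
  proof -
    have "0 \<le> (l - 2)^2 / 8" by simp
    then show ?thesis by (simp add: power2_eq_square field_simps)
  qed
  also have "\<dots> \<le> exp (l^2/8)" by (rule exp_ge_add_one_self)
  finally have "l * exp (- (l^2) / 8) \<le> 2"
    by (simp add: exp_minus field_simps)
  have diff: "(c+1)/c * l - (c-1)/c * l = 2 * l / c" using c by (simp add: field_simps)
  have "Phi ((c+1)/c * l) - Phi ((c-1)/c * l) \<le> 2 * l / c * exp (- (l^2) / 8)"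
    unfolding eq diff using nd c l by (intro mult_left_mono) auto
  also have "\<dots> = (2 / c) * (l * exp (- (l^2) / 8))" by simp
  also have "\<dots> \<le> (2 / c) * 2" using \<open>l * exp (- (l^2) / 8) \<le> 2\<close> c by (intro mult_left_mono) auto
  finally show ?thesis by simp
qed

theorem corollary2:
  shows "(\<forall>c>1.
            (\<exists>g :: real \<Rightarrow> real.
               (\<forall>mu sig. sig > 0 \<longrightarrow> coverage c mu sig = g (mu / sig))
             \<and> (\<forall>lam. g (- lam) = g lam))
          \<and> (\<forall>mu sig. sig > 0 \<longrightarrow> coverage c mu sig = P2 (\<bar>mu\<bar> / sig) c)
          \<and> lambda_star c \<ge> 0
          \<and> (\<forall>lam\<ge>0. P2 (lambda_star c) c \<le> P2 lam c))
       \<and> (\<forall>alpha. 0 < alpha \<and> alpha < 1/2 \<longrightarrow>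
            (\<exists>c>1. \<forall>mu sig. sig > 0 \<longrightarrow> coverage c mu sig \<ge> 1 - alpha))"
proof (intro conjI allI impI)
  fix c :: real assume c: "c > 1"
  show "\<exists>g :: real \<Rightarrow> real.
               (\<forall>mu sig. sig > 0 \<longrightarrow> coverage c mu sig = g (mu / sig))
             \<and> (\<forall>lam. g (- lam) = g lam)"
    by (rule exI[of _ "\<lambda>l. P2 \<bar>l\<bar> c"]) (auto simp: coverage_eq[OF c])
next
  fix c mu sig :: real assume c: "c > 1" and sig: "sig > 0"
  show "coverage c mu sig = P2 (\<bar>mu\<bar> / sig) c"
    using coverage_eq[OF c sig] .
next
  fix c :: real assume c: "c > 1"
  show "lambda_star c \<ge> 0" using lambda_star_nonneg[OF c] .
next
  fix c lam :: real assume c: "c > 1" and lam: "lam \<ge> 0"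
  show "P2 (lambda_star c) c \<le> P2 lam c" using P2_min[OF c lam] .
next
  fix alpha :: real assume a: "0 < alpha \<and> alpha < 1/2"
  define c where "c = 4 / alpha"
  have c2: "c \<ge> 2" using a by (simp add: c_def field_simps)
  have c1: "c > 1" using c2 by simp
  show "\<exists>c>1. \<forall>mu sig. sig > 0 \<longrightarrow> coverage c mu sig \<ge> 1 - alpha"
  proof (intro exI[of _ c] conjI allI impI c1)
    fix mu sig :: real assume sig: "sig > 0"
    have "Phi ((c+1)/c * (\<bar>mu\<bar>/sig)) - Phi ((c-1)/c * (\<bar>mu\<bar>/sig)) \<le> 4 / c"
      using sig by (intro gap_bound c2) auto
    moreover have "4 / c = alpha" using a by (simp add: c_def)
    ultimately show "coverage c mu sig \<ge> 1 - alpha"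
      unfolding coverage_eq[OF c1 sig] P2_def by linarith
  qed
qed

end
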